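(* Let $(M,\mathcal{T})$ be a closed pseudo $3$-manifold with $v(e)\ge9$ for each $e\in E$. Let $\{l(t):t\in[0,\infty)\}\subset\mathbb{R}^E_{>0}$ be the solution of the extended Ricci flow with initial data $l^0\in\mathbb{R}^E_{>0}$ satisfying $l^0_e\in(0,\operatorname{arccosh}b_{v(e)})$ for all $e\in E$. If there exists $t_0>0$ such that $\sup\{l_e(t):0\le t\le t_0,\ e\in E\}\le\operatorname{arccosh}2$, then for each $e\in E$, $l_e(t)\in(0,\operatorname{arccosh}b_{v(e)}]$ for all $t\in[0,t_0]$.
   Context: A closed pseudo $3$-manifold $(M,\mathcal{T})$: a finite disjoint union $\widehat{\mathcal{T}}$ of tetrahedra with faces glued in pairs by affine homeomorphisms; $\mathcal{T}$ is the quotient complex, $E$ its edge set, $P_E$ the quotient map on edges, $v(e)=|P_E^{-1}(e)|$ the valence. For $l\in\mathbb{R}^E_{>0}$, each edge $\hat e$ of $\widehat{\mathcal{T}}$ gets length $l_{P_E(\hat e)}$; in a tetrahedron with vertices $i,j,k,h$ let $x_{ab}=\cosh$(length of $ab$) and $$\phi_{ij}=\frac{x_{ik}x_{ih}+x_{jk}x_{jh}+x_{ij}x_{ik}x_{jh}+x_{ij}x_{ih}x_{jk}-x_{ij}^2x_{kh}+x_{kh}}{\sqrt{2x_{ij}x_{ik}x_{jk}+x_{ij}^2+x_{ik}^2+x_{jk}^2-1}\sqrt{2x_{ij}x_{ih}x_{jh}+x_{ij}^2+x_{ih}^2+x_{jh}^2-1}},$$ dihedral angle $\alpha_{ij}=\arccos(\max\{-1,\min\{\phi_{ij},1\}\})$.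 $\widetilde K_e(l)=2\pi-\sum_{\hat e\in P_E^{-1}(e)}\alpha(\hat e)$. Extended Ricci flow: $\frac{d}{dt}l_e=\widetilde K_e(l)l_e$, $l(0)=l^0$ (unique solution for all $t\ge0$). Constants: $b_9=2$, $b_n=\frac{16}{1+\cos(2\pi/n)}-7$ for $n\ge10$. *)

theory Defs
  imports Complex_Main
begin

text \<open>Combinatorial model of a closed pseudo 3-manifold: a finite set Tets of
tetrahedra, each with vertices 0,1,2,3. A face of tetrahedron t is written (t,k),
the face opposite vertex k. The face pairing gl glues every face to a different face
(involution without fixed points, so all faces are glued in pairs), and the affine
homeomorphism of a glued face is determined by the vertex bijection sig f between
the vertex sets of the two faces (sig of the partner face being its inverse).\<close>

definition Verts :: "nat set" where "Verts = {0..3}"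

definition Faces :: "'t set \<Rightarrow> ('t \<times> nat) set" where
  "Faces Tets = Tets \<times> Verts"

definition closed_pseudo_3_manifold ::
  "'t set \<Rightarrow> ('t \<times> nat \<Rightarrow> 't \<times> nat) \<Rightarrow> ('t \<times> nat \<Rightarrow> nat \<Rightarrow> nat) \<Rightarrow> bool" where
  "closed_pseudo_3_manifold Tets gl sig \<longleftrightarrow>
     finite Tets \<and>
     (\<forall>f \<in> Faces Tets.
        gl f \<in> Faces Tets \<and> gl f \<noteq> f \<and> gl (gl f) = f \<and>
        bij_betw (sig f) (Verts - {snd f}) (Verts - {snd (gl f)}) \<and>
        (\<forall>i \<in> Verts - {snd f}. sig (gl f) (sig f i) = i))"

definition HEdges :: "'t set \<Rightarrow> ('t \<times> nat set) set" where
  "HEdges Tets = {(t, {i, j}) | t i j. t \<in> Tets \<and> i \<in> Verts \<and> j \<in> Verts \<and> i \<noteq> j}"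

definition edge_step ::
  "'t set \<Rightarrow> ('t \<times> nat \<Rightarrow> 't \<times> nat) \<Rightarrow> ('t \<times> nat \<Rightarrow> nat \<Rightarrow> nat)
     \<Rightarrow> (('t \<times> nat set) \<times> ('t \<times> nat set)) set" where
  "edge_step Tets gl sig =
     {((t, {i, j}), (fst (gl (t, k)), {sig (t, k) i, sig (t, k) j})) | t k i j.
        (t, k) \<in> Faces Tets \<and> i \<in> Verts - {k} \<and> j \<in> Verts - {k} \<and> i \<noteq> j}"

definition edge_equiv where
  "edge_equiv Tets gl sig = (edge_step Tets gl sig \<union> (edge_step Tets gl sig)\<inverse>)\<^sup>*"

definition PE where
  "PE Tets gl sig x = edge_equiv Tets gl sig `` {x}"

definition Edges where
  "Edges Tets gl sig = PE Tets gl sig ` HEdges Tets"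

definition valence where
  "valence Tets gl sig e = card {x \<in> HEdges Tets. PE Tets gl sig x = e}"

text \<open>phi_ij in a tetrahedron with vertices i,j,k,h; x a b = cosh(length of ab).\<close>
definition phi :: "(nat \<Rightarrow> nat \<Rightarrow> real) \<Rightarrow> nat \<Rightarrow> nat \<Rightarrow> nat \<Rightarrow> nat \<Rightarrow> real" where
  "phi x i j k h =
     (x i k * x i h + x j k * x j h + x i j * x i k * x j h + x i j * x i h * x j k
        - (x i j)\<^sup>2 * x k h + x k h) /
     (sqrt (2 * x i j * x i k * x j k + (x i j)\<^sup>2 + (x i k)\<^sup>2 + (x j k)\<^sup>2 - 1) *
      sqrt (2 * x i j * x i h * x j h + (x i j)\<^sup>2 + (x i h)\<^sup>2 + (x j h)\<^sup>2 - 1))"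

text \<open>Dihedral angle at the edge (t,s) of the disjoint union, for edge lengths l on E
(phi_ij is symmetric in i,j and in k,h, so the choice of order is irrelevant).\<close>
definition dihedral where
  "dihedral Tets gl sig (l :: ('t \<times> nat set) set \<Rightarrow> real) ed =
     (let t = fst ed; s = snd ed; i = Min s; j = Max s;
          r = Verts - s; k = Min r; h = Max r;
          x = (\<lambda>a b. cosh (l (PE Tets gl sig (t, {a, b}))))
      in arccos (max (-1) (min (phi x i j k h) 1)))"

definition curvature where
  "curvature Tets gl sig l e =
     2 * pi - (\<Sum>ed \<in> {x \<in> HEdges Tets. PE Tets gl sig x = e}. dihedral Tets gl sig l ed)"

definition bconst :: "nat \<Rightarrow> real" where
  "bconst n = (if n = 9 then 2 else 16 / (1 + cos (2 * pi / real n)) - 7)"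

end

theory Submission
  imports Defs "HOL-Analysis.Analysis"
begin

lemma mono_frac:
  fixes al be ga de x1 x2 :: real
  assumes "x1 \<le> x2"
    and Q: "\<And>x. x1 \<le> x \<Longrightarrow> x \<le> x2 \<Longrightarrow> x\<^sup>2 + 2*ga*x + de > 0"
    and L: "\<And>x. x1 \<le> x \<Longrightarrow> x \<le> x2 \<Longrightarrow> x*(al*ga-be) + al*de - be*ga \<ge> 0"
  shows "(al*x1 + be)/sqrt(x1\<^sup>2 + 2*ga*x1 + de) \<le> (al*x2 + be)/sqrt(x2\<^sup>2 + 2*ga*x2 + de)"
proof (rule DERIV_nonneg_imp_nondecreasing[OF assms(1)])
  fix x assume x: "x1 \<le> x" "x \<le> x2"
  define q where "q = x\<^sup>2 + 2*ga*x + de"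
  have q: "q > 0" using Q[OF x] q_def by simp
  have sq: "sqrt q * sqrt q = q" using q by simp
  have d1: "((\<lambda>x. x\<^sup>2 + 2*ga*x + de) has_real_derivative (2*x + 2*ga)) (at x)"
    by (auto intro!: derivative_eq_intros)
  have d2: "((\<lambda>x. sqrt (x\<^sup>2 + 2*ga*x + de)) has_real_derivative ((2*x + 2*ga) / (2 * sqrt q))) (at x)"
  proof -
    have "((\<lambda>x. sqrt (x\<^sup>2 + 2*ga*x + de)) has_real_derivative (inverse (sqrt q) / 2 * (2*x + 2*ga))) (at x)"
      using DERIV_chain2[OF DERIV_real_sqrt[OF q, unfolded q_def] d1] unfolding q_def by simp
    then show ?thesis by (simp add: field_simps)
  qed
  have d3: "((\<lambda>x. al*x + be) has_real_derivative al) (at x)"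
    by (auto intro!: derivative_eq_intros)
  have "((\<lambda>x. (al*x + be)/sqrt(x\<^sup>2 + 2*ga*x + de)) has_real_derivative
     (al * sqrt q - (al*x+be) * ((2*x + 2*ga) / (2 * sqrt q))) / (sqrt q * sqrt q)) (at x)"
    using DERIV_divide[OF d3 d2] q unfolding q_def by simp
  moreover have "(al * sqrt q - (al*x+be) * ((2*x + 2*ga) / (2 * sqrt q))) / (sqrt q * sqrt q)
      = (x*(al*ga-be) + al*de - be*ga) / (q * sqrt q)"
  proof -
    have S: "sqrt q > 0" using q by simp
    have "(al * sqrt q - (al*x+be) * ((2*x + 2*ga) / (2 * sqrt q))) / (sqrt q * sqrt q)
        = (2 * al * (sqrt q * sqrt q) - (al*x+be) * (2*x + 2*ga)) / (2 * q * sqrt q)"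
      using S sq by (simp add: field_simps)
    also have "\<dots> = (2 * al * q - (al*x+be) * (2*x + 2*ga)) / (2 * q * sqrt q)" using sq by simp
    also have "2 * al * q - (al*x+be) * (2*x + 2*ga) = 2 * (x*(al*ga-be) + al*de - be*ga)"
      unfolding q_def by (simp add: algebra_simps power2_eq_square)
    also have "(2 * (x*(al*ga-be) + al*de - be*ga)) / (2 * q * sqrt q) = (x*(al*ga-be) + al*de - be*ga) / (q * sqrt q)"
    proof -
      have eq: "\<And>A B::real. (2*A)/(2*B) = A/B" by simp
      show ?thesis using eq[of "x*(al*ga-be) + al*de - be*ga" "q * sqrt q"] by (simp only: mult.assoc)
    qed
    finally show ?thesis .
  qed
  moreover have "(x*(al*ga-be) + al*de - be*ga) / (q * sqrt q) \<ge> 0"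
    using L[OF x] q by simp
  ultimately show "\<exists>y. ((\<lambda>x. (al*x + be)/sqrt(x\<^sup>2 + 2*ga*x + de)) has_real_derivative y) (at x) \<and> 0 \<le> y"
    by metis
qed

definition Fn :: "real \<Rightarrow> real \<Rightarrow> real \<Rightarrow> real \<Rightarrow> real \<Rightarrow> real \<Rightarrow> real" where
  "Fn a p q r s u = (p*q + r* s + a*p* s + a*q*r - a\<^sup>2*u + u) /
     (sqrt (2*a*p*r + a\<^sup>2 + p\<^sup>2 + r\<^sup>2 - 1) * sqrt (2*a*q* s + a\<^sup>2 + q\<^sup>2 + s\<^sup>2 - 1))"

lemma inner_nonneg:
  fixes a q r s x u :: real
  assumes "1 \<le> a" "1 \<le> u" "1 \<le> x" "x \<le> 2" "1 \<le> q" "q \<le> 2" "1 \<le> r" "r \<le> 2" "1 \<le> s" "s \<le> 2"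
  shows "q - q*r\<^sup>2 + x*r* s + a* s + x*u + a*r*u \<ge> 0"
proof -
  have "r\<^sup>2 \<ge> 1" using assms by (simp add: one_le_power)
  then have 1: "q*(1-r\<^sup>2) \<ge> 2*(1-r\<^sup>2)" using assms by (intro mult_right_mono_neg) auto
  have 2: "x*r* s \<ge> r" using assms
    by (metis mult.commute mult_le_cancel_right1 mult_less_cancel_left1 mult_mono not_less order.trans zero_le_one)
  have 3: "a* s \<ge> 1" using assms by (metis mult_mono' order_trans zero_le_one mult_1)
  have 4: "x*u \<ge> 1" using assms by (metis mult_mono' order_trans zero_le_one mult_1)
  have 5: "a*r*u \<ge> r" using assms
    by (metis mult.commute mult_le_cancel_right1 mult_less_cancel_left1 mult_mono not_less order.trans zero_le_one)
  have 6: "2*(1-r\<^sup>2) + r + 1 + 1 + r = 2*(2-r)*(1+r)" by (simp add: algebra_simps power2_eq_square)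
  have 7: "2*(2-r)*(1+r) \<ge> 0" using assms by simp
  show ?thesis using 1 2 3 4 5 6 7 by (simp add: algebra_simps)
qed

lemma Fn_mono_p:
  fixes a p q r s u :: real
  assumes "1 \<le> a" "1 \<le> u" "1 \<le> p" "p \<le> 2" "1 \<le> q" "q \<le> 2" "1 \<le> r" "r \<le> 2" "1 \<le> s" "s \<le> 2"
  shows "Fn a p q r s u \<le> Fn a 2 q r s u"
proof -
  define al where "al = q + a* s"
  define be where "be = r* s + a*q*r - a\<^sup>2*u + u"
  define ga where "ga = a*r"
  define de where "de = r\<^sup>2 + a\<^sup>2 - 1"
  define D2 where "D2 = 2*a*q* s + a\<^sup>2 + q\<^sup>2 + s\<^sup>2 - 1"
  have D2: "D2 > 0" unfolding D2_def using assms
    by (smt (verit) mult_nonneg_nonneg one_le_power)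
  have F: "Fn a x q r s u = (al*x + be)/sqrt(x\<^sup>2 + 2*ga*x + de) / sqrt D2" for x
    unfolding Fn_def al_def be_def ga_def de_def D2_def
    by (simp add: algebra_simps divide_divide_eq_left)
  have "(al*p + be)/sqrt(p\<^sup>2 + 2*ga*p + de) \<le> (al*2 + be)/sqrt(2\<^sup>2 + 2*ga*2 + de)"
  proof (rule mono_frac)
    show "p \<le> 2" by fact
  next
    fix x :: real assume x: "p \<le> x" "x \<le> 2"
    show "x\<^sup>2 + 2*ga*x + de > 0" unfolding ga_def de_def using assms x
      by (smt (verit) mult_nonneg_nonneg one_le_power)
    have "x*(al*ga-be) + al*de - be*ga = (a\<^sup>2-1)*(q - q*r\<^sup>2 + x*r* s + a* s + x*u + a*r*u)"
      unfolding al_def be_def ga_def de_def by (simp add: algebra_simps power2_eq_square)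
    moreover have "a\<^sup>2 - 1 \<ge> 0" using assms by (simp add: one_le_power)
    moreover have "q - q*r\<^sup>2 + x*r* s + a* s + x*u + a*r*u \<ge> 0"
      using assms x by (intro inner_nonneg) auto
    ultimately show "x*(al*ga-be) + al*de - be*ga \<ge> 0" by simp
  qed
  then show ?thesis unfolding F using D2 by (intro divide_right_mono) auto
qed


lemma Fn_sym1: "Fn a p q r s u = Fn a q p s r u"
  unfolding Fn_def by (simp add: algebra_simps)
lemma Fn_sym2: "Fn a p q r s u = Fn a r s p q u"
  unfolding Fn_def by (simp add: algebra_simps)

lemma Fn_all2: "a > 1 \<Longrightarrow> Fn a 2 2 2 2 u = (8 - u*(a-1))/(a+7)"
proof -
  assume a: "a > 1"
  have e: "2*a*2*2 + a\<^sup>2 + 2\<^sup>2 + 2\<^sup>2 - 1 = (a+1)*(a+7)" by (simp add: algebra_simps power2_eq_square)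
  have "sqrt ((a+1)*(a+7)) * sqrt ((a+1)*(a+7)) = (a+1)*(a+7)" using a by simp
  then have "Fn a 2 2 2 2 u = (8 + 8*a - u*(a\<^sup>2-1)) / ((a+1)*(a+7))"
    unfolding Fn_def e by (simp add: algebra_simps)
  also have "8 + 8*a - u*(a\<^sup>2-1) = (a+1)*(8 - u*(a-1))" by (simp add: algebra_simps power2_eq_square)
  finally show ?thesis using a by simp
qed

lemma Fn_bound:
  fixes a p q r s u :: real
  assumes "1 < a" "1 < u" "1 \<le> p" "p \<le> 2" "1 \<le> q" "q \<le> 2" "1 \<le> r" "r \<le> 2" "1 \<le> s" "s \<le> 2"
  shows "Fn a p q r s u < (9 - a)/(a+7)"
proof -
  have A: "1 \<le> a" "1 \<le> u" using assms by auto
  have "Fn a p q r s u \<le> Fn a 2 q r s u" using Fn_mono_p A assms by auto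
  also have "\<dots> = Fn a q 2 s r u" by (rule Fn_sym1)
  also have "\<dots> \<le> Fn a 2 2 s r u" using Fn_mono_p A assms by auto
  also have "\<dots> = Fn a 2 2 r s u" by (rule Fn_sym1)
  also have "\<dots> = Fn a r s 2 2 u" by (rule Fn_sym2)
  also have "\<dots> \<le> Fn a 2 s 2 2 u" using Fn_mono_p A assms by auto
  also have "\<dots> = Fn a s 2 2 2 u" by (rule Fn_sym1)
  also have "\<dots> \<le> Fn a 2 2 2 2 u" using Fn_mono_p A assms by auto
  also have "\<dots> = (8 - u*(a-1))/(a+7)" using assms by (simp add: Fn_all2)
  also have "\<dots> < (9 - a)/(a+7)"
  proof -
    have "(u-1)*(a-1) > 0" using assms by simp
    then have "8 - u*(a-1) < 9 - a" by (simp add: algebra_simps)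
    then show ?thesis using assms by (intro divide_strict_right_mono) auto
  qed
  finally show ?thesis .
qed


lemma Verts_eq: "Verts = {0,1,2,3}" by (auto simp: Verts_def)

lemma tet_indices:
  assumes "i \<in> Verts" "j \<in> Verts" "i \<noteq> j"
  shows "{Min {i,j}, Max {i,j}} = {i,j} \<and> Min {i,j} \<noteq> Max {i,j} \<and>
    Min (Verts - {i,j}) \<noteq> Max (Verts - {i,j}) \<and>
    Min (Verts - {i,j}) \<in> Verts \<and> Max (Verts - {i,j}) \<in> Verts \<and>
    Min (Verts - {i,j}) \<notin> {i,j} \<and> Max (Verts - {i,j}) \<notin> {i,j}"
  using assms unfolding Verts_eq
  by (auto simp: insert_Diff_if)

lemma bconst_facts:
  assumes n: "n \<ge> 10"
  shows "0 < cos (2*pi/real n) \<and> cos (2*pi/real n) < 1 \<and> 1 < bconst n \<and>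
         (9 - bconst n)/(bconst n + 7) = cos (2*pi/real n)"
proof -
  define c where "c = cos (2*pi/real n)"
  have n0: "real n \<ge> 10" using n by simp
  have x0: "0 < 2*pi/real n" using n0 by simp
  have x1: "2*pi/real n \<le> 2*pi/10" using n0 by (intro divide_left_mono) auto
  have x2: "2*pi/real n < pi/2" using x1 pi_gt_zero by linarith
  have c0: "c > 0" unfolding c_def using x0 x2 by (intro cos_gt_zero_pi) auto
  have c1: "c < 1" unfolding c_def using cos_monotone_0_pi[of 0 "2*pi/real n"] x0 x2 by simp
  have b: "bconst n = 16/(1+c) - 7" unfolding bconst_def c_def using n by simp
  have b1: "1 < bconst n" unfolding b using c0 c1 by (simp add: field_simps)
  have "(9 - bconst n)/(bconst n + 7) = c" unfolding b using c0 c1 by (simp add: field_simps)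
  then show ?thesis using c0 c1 b1 unfolding c_def by simp
qed

lemma dihedral_gt:
  fixes l :: "('t \<times> nat set) set \<Rightarrow> real"
  assumes ed: "ed \<in> HEdges Tets"
    and bd: "\<forall>e\<in>Edges Tets gl sig. 0 < l e \<and> l e \<le> arcosh 2"
    and le: "l (PE Tets gl sig ed) = arcosh (bconst n)"
    and n: "n \<ge> 10"
  shows "dihedral Tets gl sig l ed > 2*pi/real n"
proof -
  obtain t i j where ed': "ed = (t,{i,j})" and t: "t \<in> Tets" and ij: "i \<in> Verts" "j \<in> Verts" "i \<noteq> j"
    using ed unfolding HEdges_def by blast
  define a where "a = bconst n"
  define c where "c = cos (2*pi/real n)"
  have bf: "0 < c" "c < 1" "1 < a" "(9 - a)/(a+7) = c"
    using bconst_facts[OF n] unfolding a_def c_def by auto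
  define x where "x = (\<lambda>u v. cosh (l (PE Tets gl sig (t, {u, v}))))"
  have xb: "1 < x u v \<and> x u v \<le> 2" if "u \<in> Verts" "v \<in> Verts" "u \<noteq> v" for u v
  proof -
    have "(t,{u,v}) \<in> HEdges Tets" unfolding HEdges_def using t that by blast
    then have "PE Tets gl sig (t,{u,v}) \<in> Edges Tets gl sig" unfolding Edges_def by blast
    then have L: "0 < l (PE Tets gl sig (t,{u,v}))" "l (PE Tets gl sig (t,{u,v})) \<le> arcosh 2"
      using bd by auto
    have "cosh 0 < x u v" unfolding x_def using L by (intro cosh_real_strict_mono) auto
    moreover have "x u v \<le> cosh (arcosh 2)" unfolding x_def using L
      by (subst cosh_real_nonneg_le_iff) auto
    ultimately show ?thesis by simp
  qed
  define S where "S = {i,j}"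
  define i' where "i' = Min S"
  define j' where "j' = Max S"
  define k where "k = Min (Verts - S)"
  define h where "h = Max (Verts - S)"
  have ti: "{i',j'} = S" "i' \<noteq> j'" "k \<noteq> h" "k \<in> Verts" "h \<in> Verts" "k \<notin> S" "h \<notin> S"
    using tet_indices[OF ij] unfolding i'_def j'_def k_def h_def S_def by auto
  have Sv: "i' \<in> Verts" "j' \<in> Verts" "i' \<in> S" "j' \<in> S" using ti(1) ij unfolding S_def by auto
  have ne: "i' \<noteq> k" "i' \<noteq> h" "j' \<noteq> k" "j' \<noteq> h" using ti Sv by auto
  have xa: "x i' j' = a" unfolding x_def ti(1) using le bf(3) unfolding ed' S_def a_def by simp
  have ph: "phi x i' j' k h = Fn a (x i' k) (x i' h) (x j' k) (x j' h) (x k h)"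
    unfolding phi_def Fn_def xa ..
  have "phi x i' j' k h < c"
    unfolding ph bf(4)[symmetric]
    apply (rule Fn_bound)
    using bf(3) xb[of i' k] xb[of i' h] xb[of j' k] xb[of j' h] xb[of k h] ti Sv ne by auto
  then have cl: "max (-1) (min (phi x i' j' k h) 1) < c" using bf by auto
  have "dihedral Tets gl sig l ed = arccos (max (-1) (min (phi x i' j' k h) 1))"
    unfolding dihedral_def Let_def ed' x_def i'_def j'_def k_def h_def S_def by simp
  also have "\<dots> > arccos c" using cl bf by (intro arccos_less_arccos) auto
  also have "arccos c = 2*pi/real n" unfolding c_def
  proof (rule arccos_cos)
    show "0 \<le> 2*pi/real n" by simp
    show "2*pi/real n \<le> pi" using n by (simp add: field_simps)
  qed
  finally show ?thesis .
qed

lemma curv_neg: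
  fixes l :: "('t \<times> nat set) set \<Rightarrow> real"
  assumes bd: "\<forall>e\<in>Edges Tets gl sig. 0 < l e \<and> l e \<le> arcosh 2"
    and le: "l e = arcosh (bconst (valence Tets gl sig e))"
    and n: "valence Tets gl sig e \<ge> 10"
  shows "curvature Tets gl sig l e < 0"
proof -
  define n where "n = valence Tets gl sig e"
  define A where "A = {x \<in> HEdges Tets. PE Tets gl sig x = e}"
  have cA: "card A = n" unfolding A_def n_def valence_def ..
  then have fA: "finite A" and nA: "A \<noteq> {}" using n unfolding n_def by (auto intro: card_ge_0_finite)
  have "(\<Sum>ed\<in>A. 2*pi/real n) < (\<Sum>ed\<in>A. dihedral Tets gl sig l ed)"
  proof (rule sum_strict_mono[OF fA nA])
    fix ed assume "ed \<in> A"
    then have "ed \<in> HEdges Tets" "PE Tets gl sig ed = e" unfolding A_def by auto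
    then show "2*pi/real n < dihedral Tets gl sig l ed"
      using dihedral_gt[OF _ bd] le n unfolding n_def by auto
  qed
  moreover have "(\<Sum>ed\<in>A. 2*pi/real n) = 2*pi" using cA n unfolding n_def by simp
  ultimately show ?thesis unfolding curvature_def A_def by simp
qed

theorem proposition3p5:
  fixes Tets :: "'t set"
    and gl :: "'t \<times> nat \<Rightarrow> 't \<times> nat"
    and sig :: "'t \<times> nat \<Rightarrow> nat \<Rightarrow> nat"
    and l :: "real \<Rightarrow> ('t \<times> nat set) set \<Rightarrow> real"
    and l0 :: "('t \<times> nat set) set \<Rightarrow> real"
    and t0 :: real
  assumes M: "closed_pseudo_3_manifold Tets gl sig"
    and val: "\<forall>e \<in> Edges Tets gl sig. valence Tets gl sig e \<ge> 9"
    and pos: "\<forall>t \<ge> 0. \<forall>e \<in> Edges Tets gl sig. l t e > 0"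
    and flow: "\<forall>t \<ge> 0. \<forall>e \<in> Edges Tets gl sig.
                 ((\<lambda>s. l s e) has_real_derivative
                    (curvature Tets gl sig (l t) e * l t e)) (at t within {0..})"
    and init: "\<forall>e \<in> Edges Tets gl sig. l 0 e = l0 e"
    and l0_bd: "\<forall>e \<in> Edges Tets gl sig.
                  0 < l0 e \<and> l0 e < arcosh (bconst (valence Tets gl sig e))"
    and t0: "t0 > 0"
    and sup: "\<forall>t \<in> {0..t0}. \<forall>e \<in> Edges Tets gl sig. l t e \<le> arcosh 2"
  shows "\<forall>e \<in> Edges Tets gl sig. \<forall>t \<in> {0..t0}.
           0 < l t e \<and> l t e \<le> arcosh (bconst (valence Tets gl sig e))"
proof (intro ballI conjI)
  fix e t assume e: "e \<in> Edges Tets gl sig" and t: "t \<in> {0..t0}"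
  show "0 < l t e" using pos e t by auto
  define n where "n = valence Tets gl sig e"
  define B where "B = arcosh (bconst n)"
  define g where "g = (\<lambda>s. l s e)"
  show "l t e \<le> arcosh (bconst (valence Tets gl sig e))"
  proof (cases "n = 9")
    case True
    then show ?thesis using sup e t unfolding n_def by (simp add: bconst_def)
  next
    case False
    then have n10: "n \<ge> 10" using val e unfolding n_def by force
    have b1: "1 < bconst n" using bconst_facts[OF n10] by simp
    have B0: "B > 0" unfolding B_def using b1 by simp
    have cont: "continuous_on {0..} g"
      unfolding g_def using flow e by (intro DERIV_continuous_on) auto
    show ?thesis
    proof (rule ccontr)
      assume "\<not> ?thesis"
      then have gt1: "g t > B" unfolding g_def B_def n_def by simp
      define t1 where "t1 = t"
      have t1: "0 \<le> t1" "t1 \<le> t0" using t unfolding t1_def by auto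
      define S where "S = {0..t1} \<inter> g -` {..B}"
      have cS: "closed S" unfolding S_def
        using continuous_on_subset[OF cont, of "{0..t1}"] by (intro continuous_closed_preimage) auto
      have g0: "g 0 < B" using init l0_bd e unfolding g_def B_def n_def by auto
      have S0: "0 \<in> S" unfolding S_def using t1 g0 by auto
      have bS: "bdd_above S" unfolding S_def by (auto intro: bdd_aboveI[of _ t1])
      define s where "s = Sup S"
      have sS: "s \<in> S" unfolding s_def using closed_contains_Sup[OF _ bS cS] S0 by blast
      have s: "0 \<le> s" "s \<le> t1" "g s \<le> B" using sS unfolding S_def by auto
      obtain y where y: "s \<le> y" "y \<le> t1" "g y = B"
        using IVT'[of g s B t1] s gt1 continuous_on_subset[OF cont, of "{s..t1}"] unfolding t1_def
        by auto
      have "y \<in> S" unfolding S_def using y s by auto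
      then have "y \<le> s" unfolding s_def using bS by (simp add: cSup_upper)
      then have gs: "g s = B" using y by simp
      have st: "s < t1" using gs gt1 s unfolding t1_def by (cases "s = t") auto
      have bd: "\<forall>e\<in>Edges Tets gl sig. 0 < l s e \<and> l s e \<le> arcosh 2"
        using pos sup s t1 by auto
      have cn: "curvature Tets gl sig (l s) e < 0"
        using curv_neg[OF bd] gs n10 unfolding g_def B_def n_def by auto
      have der: "(g has_real_derivative (curvature Tets gl sig (l s) e * l s e)) (at s within {0..})"
        using flow e s unfolding g_def by auto
      have neg: "curvature Tets gl sig (l s) e * l s e < 0"
        using cn B0 gs unfolding g_def by (simp add: mult_neg_pos)
      obtain d where d: "d > 0" "\<And>h. h > 0 \<Longrightarrow> s + h \<in> {0..} \<Longrightarrow> h < d \<Longrightarrow> g s > g (s + h)"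
        using has_real_derivative_neg_dec_right[OF der neg] by blast
      define h where "h = min (d/2) (t1 - s)"
      have h: "h > 0" "h < d" "s + h \<le> t1" using d st unfolding h_def by auto
      have "g (s + h) < B" using d(2)[OF h(1) _ h(2)] s h gs by auto
      then have "s + h \<in> S" unfolding S_def using s h by auto
      then have "s + h \<le> s" using cSup_upper[OF _ bS] unfolding s_def by blast
      then show False using h by simp
    qed
  qed
qed
end
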